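(* Let $\phi:\Omega^{even}(\mathbb{C}^n)^{\otimes 2}\to\Omega^{even}(\mathbb{C}^n)$ be the linear map $\phi(\omega_1\otimes\omega_2)=d\omega_1\wedge d\omega_2$. For any $i,j\in[1,n]$ and any $\omega_1,\omega_2\in\Omega^{even}(\mathbb{C}^n)$, the element $(x_{i1}-x_{i2})(x_{j1}-x_{j2})\,\omega_1\otimes\omega_2$ lies in the kernel of $\phi$. Consequently, for every $m\ge 2$, the submodule $(x_{i1}-x_{i2})(x_{j1}-x_{j2})\,\Omega^{mn}$ lies in the kernel of $\psi:\Omega^{mn}\to B_m(A_n)$.
   Context: $\Omega^{even}(\mathbb{C}^n)$ is the space of polynomial differential forms of even degree on $\mathbb{C}^n$ with coordinates $y_1,\dots,y_n$. For $m\ge 1$, $\Omega^{mn}:=\Omega^{even}(\mathbb{C}^n)^{\otimes m}$, which is a module over $\mathcal{O}_{mn}=\mathbb{C}[x_{ij}]_{1\le i\le n,1\le j\le m}$, where $x_{ij}$ acts by multiplication by the coordinate $y_i$ on the $j$-th tensor factor. $A_n$ is the free associative algebra on $n$ generators over $\mathbb{C}$, with lower central series $L_1=A_n$, $L_i=[A_n,L_{i-1}]$, $B_i(A_n)=L_i/L_{i+1}$; $\bar B_1(A_n)$ is the quotient of $B_1(A_n)=A_n/[A_n,A_n]$ by the image of $A_n[[A_n,A_n],A_n]A_n$, and the Lie bracket of $A_n$ induces brackets $\bar B_1\otimes \bar B_1\to B_2$, $B_i\otimes\bar B_1\to B_{i+1}$. By results of Feigin–Shoikhet there is a surjective linear map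 $\xi:\Omega^{even}(\mathbb{C}^n)\to\bar B_1(A_n)$ with kernel the exact even forms, and an isomorphism $\eta$ from the exact even forms of positive degree onto $B_2(A_n)$, such that $[\xi(\omega_1),\xi(\omega_2)]=\eta(d\omega_1\wedge d\omega_2)$. The map $\psi:\Omega^{mn}\to B_m(A_n)$ (for $m\ge2$) is defined by $\psi(\omega_1\otimes\cdots\otimes\omega_m)=[[\cdots[[b_1,b_2],b_3],\ldots],b_m]$ with $b_i=\xi(\omega_i)$. *)

theory Defs
  imports Complex_Main
begin

text \<open>A basis monomial (a, S) stands for y^a dy_{s1} wedge ... wedge dy_{sk}, where
  s1 < ... < sk are the elements of S.  Coordinates are indexed 0..n-1
  (the paper's y_1..y_n).\<close>

type_synonym mono = "(nat \<Rightarrow> nat) \<times> nat set"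
type_synonym form = "mono \<Rightarrow> complex"
type_synonym tensor = "mono list \<Rightarrow> complex"
type_synonym word = "nat list"
type_synonym nc = "word \<Rightarrow> complex"

definition supp :: "('a \<Rightarrow> complex) \<Rightarrow> 'a set" where
  "supp f = {x. f x \<noteq> 0}"

definition valid_mono :: "nat \<Rightarrow> mono \<Rightarrow> bool" where
  "valid_mono n u \<longleftrightarrow> (\<forall>k. n \<le> k \<longrightarrow> fst u k = 0) \<and> snd u \<subseteq> {..<n}"

definition is_form :: "nat \<Rightarrow> form \<Rightarrow> bool" where
  "is_form n \<omega> \<longleftrightarrow> finite (supp \<omega>) \<and> (\<forall>u\<in>supp \<omega>. valid_mono n u)"

definition even_form :: "nat \<Rightarrow> form \<Rightarrow> bool" where
  "even_form n \<omega> \<longleftrightarrow> is_form n \<omega> \<and> (\<forall>u\<in>supp \<omega>. even (card (snd u)))"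

definition bas :: "mono \<Rightarrow> form" where
  "bas u = (\<lambda>v. if v = u then 1 else 0)"

text \<open>de Rham differential: d(y^a dy_S) = sum_k a_k y^(a - e_k) dy_k wedge dy_S.\<close>
definition d_bas :: "mono \<Rightarrow> form" where
  "d_bas u = (\<lambda>v. \<Sum>k | k \<notin> snd u \<and> 0 < fst u k \<and>
        v = ((fst u)(k := fst u k - 1), insert k (snd u)).
        of_nat (fst u k) * (-1) ^ card {s \<in> snd u. s < k})"

definition dform :: "form \<Rightarrow> form" where
  "dform \<omega> = (\<lambda>v. \<Sum>u\<in>supp \<omega>. \<omega> u * d_bas u v)"

text \<open>Wedge product: (y^a dy_S) wedge (y^b dy_T) = sign * y^(a+b) dy_(S union T).\<close>
definition wedge_bas :: "mono \<Rightarrow> mono \<Rightarrow> form" where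
  "wedge_bas u w = (\<lambda>v. if snd u \<inter> snd w = {} \<and> v = ((\<lambda>k. fst u k + fst w k), snd u \<union> snd w)
      then (-1) ^ card {(s, t). s \<in> snd u \<and> t \<in> snd w \<and> t < s} else 0)"

definition wedge :: "form \<Rightarrow> form \<Rightarrow> form" where
  "wedge \<omega> \<eta> = (\<lambda>v. \<Sum>u\<in>supp \<omega>. \<Sum>w\<in>supp \<eta>. \<omega> u * \<eta> w * wedge_bas u w v)"

definition exact_form :: "nat \<Rightarrow> form \<Rightarrow> bool" where
  "exact_form n \<omega> \<longleftrightarrow> (\<exists>\<nu>. is_form n \<nu> \<and> \<omega> = dform \<nu>)"

definition exact_pos :: "nat \<Rightarrow> form \<Rightarrow> bool" where
  "exact_pos n \<omega> \<longleftrightarrow> exact_form n \<omega> \<and> (\<forall>u\<in>supp \<omega>. snd u \<noteq> {} \<and> even (card (snd u)))"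

text \<open>Elements of the m-th tensor power: coefficient functions on lists of m basis
  monomials (tensor factors indexed 0..m-1, the paper's 1..m).\<close>
definition is_tensor :: "nat \<Rightarrow> nat \<Rightarrow> tensor \<Rightarrow> bool" where
  "is_tensor n m T \<longleftrightarrow> finite (supp T) \<and>
     (\<forall>us\<in>supp T. length us = m \<and> (\<forall>u\<in>set us. valid_mono n u \<and> even (card (snd u))))"

definition tens :: "form list \<Rightarrow> tensor" where
  "tens \<omega>s = (\<lambda>us. if length us = length \<omega>s then (\<Prod>k<length \<omega>s. (\<omega>s ! k) (us ! k)) else 0)"

text \<open>Action of x_{ij}: multiplication by y_i on the j-th tensor factor.\<close>
definition xact :: "nat \<Rightarrow> nat \<Rightarrow> tensor \<Rightarrow> tensor" where
  "xact i j T = (\<lambda>us. if j < length us \<and> 0 < fst (us ! j) i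
      then T (us[j := ((fst (us ! j))(i := fst (us ! j) i - 1), snd (us ! j))]) else 0)"

definition xdiff :: "nat \<Rightarrow> tensor \<Rightarrow> tensor" where
  "xdiff i T = (\<lambda>us. xact i 0 T us - xact i 1 T us)"

definition phi :: "tensor \<Rightarrow> form" where
  "phi T = (\<lambda>v. \<Sum>us\<in>supp T. T us *
     (if length us = 2 then wedge (dform (bas (us ! 0))) (dform (bas (us ! 1))) v else 0))"

definition is_alg :: "nat \<Rightarrow> nc \<Rightarrow> bool" where
  "is_alg n p \<longleftrightarrow> finite (supp p) \<and> (\<forall>w\<in>supp p. set w \<subseteq> {..<n})"

definition amul :: "nc \<Rightarrow> nc \<Rightarrow> nc" where
  "amul p q = (\<lambda>w. \<Sum>k\<le>length w. p (take k w) * q (drop k w))"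

definition acomm :: "nc \<Rightarrow> nc \<Rightarrow> nc" where
  "acomm p q = (\<lambda>w. amul p q w - amul q p w)"

inductive lcs :: "nat \<Rightarrow> nat \<Rightarrow> nc \<Rightarrow> bool" for n where
  base: "is_alg n p \<Longrightarrow> lcs n 1 p"
| comm: "is_alg n a \<Longrightarrow> lcs n k b \<Longrightarrow> 1 \<le> k \<Longrightarrow> lcs n (Suc k) (acomm a b)"
| zero: "1 \<le> k \<Longrightarrow> lcs n k (\<lambda>_. 0)"
| add: "lcs n k p \<Longrightarrow> lcs n k q \<Longrightarrow> lcs n k (\<lambda>w. p w + q w)"
| smult: "lcs n k p \<Longrightarrow> lcs n k (\<lambda>w. c * p w)"

text \<open>Mset n p: p lies in [A_n,A_n] + A_n [[A_n,A_n],A_n] A_n, so that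
  bar B_1(A_n) = A_n / Mset.\<close>
inductive Mset :: "nat \<Rightarrow> nc \<Rightarrow> bool" for n where
  l2: "lcs n 2 p \<Longrightarrow> Mset n p"
| ideal: "is_alg n a \<Longrightarrow> lcs n 3 b \<Longrightarrow> is_alg n c \<Longrightarrow> Mset n (amul a (amul b c))"
| add: "Mset n p \<Longrightarrow> Mset n q \<Longrightarrow> Mset n (\<lambda>w. p w + q w)"
| smult: "Mset n p \<Longrightarrow> Mset n (\<lambda>w. c * p w)"

text \<open>xi and eta are given by representatives (lifts) in A_n:  xi w is a lift of
  xi(w) in bar B_1, eta w a lift of eta(w) in B_2 = L_2/L_3.\<close>
definition FS_data :: "nat \<Rightarrow> (form \<Rightarrow> nc) \<Rightarrow> (form \<Rightarrow> nc) \<Rightarrow> bool" where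
  "FS_data n \<xi> \<eta> \<longleftrightarrow>
     (\<forall>\<omega>. even_form n \<omega> \<longrightarrow> is_alg n (\<xi> \<omega>)) \<and>
     (\<forall>\<omega> \<omega>'. even_form n \<omega> \<longrightarrow> even_form n \<omega>' \<longrightarrow>
        Mset n (\<lambda>w. \<xi> (\<lambda>v. \<omega> v + \<omega>' v) w - \<xi> \<omega> w - \<xi> \<omega>' w)) \<and>
     (\<forall>c \<omega>. even_form n \<omega> \<longrightarrow> Mset n (\<lambda>w. \<xi> (\<lambda>v. c * \<omega> v) w - c * \<xi> \<omega> w)) \<and>
     (\<forall>p. is_alg n p \<longrightarrow> (\<exists>\<omega>. even_form n \<omega> \<and> Mset n (\<lambda>w. p w - \<xi> \<omega> w))) \<and>
     (\<forall>\<omega>. even_form n \<omega> \<longrightarrow> (Mset n (\<xi> \<omega>) \<longleftrightarrow> exact_form n \<omega>)) \<and>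
     (\<forall>\<omega>. exact_pos n \<omega> \<longrightarrow> lcs n 2 (\<eta> \<omega>)) \<and>
     (\<forall>\<omega> \<omega>'. exact_pos n \<omega> \<longrightarrow> exact_pos n \<omega>' \<longrightarrow>
        lcs n 3 (\<lambda>w. \<eta> (\<lambda>v. \<omega> v + \<omega>' v) w - \<eta> \<omega> w - \<eta> \<omega>' w)) \<and>
     (\<forall>c \<omega>. exact_pos n \<omega> \<longrightarrow> lcs n 3 (\<lambda>w. \<eta> (\<lambda>v. c * \<omega> v) w - c * \<eta> \<omega> w)) \<and>
     (\<forall>\<omega>. exact_pos n \<omega> \<longrightarrow> lcs n 3 (\<eta> \<omega>) \<longrightarrow> \<omega> = (\<lambda>_. 0)) \<and>
     (\<forall>p. lcs n 2 p \<longrightarrow> (\<exists>\<omega>. exact_pos n \<omega> \<and> lcs n 3 (\<lambda>w. p w - \<eta> \<omega> w))) \<and>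
     (\<forall>\<omega>1 \<omega>2. even_form n \<omega>1 \<longrightarrow> even_form n \<omega>2 \<longrightarrow>
        lcs n 3 (\<lambda>w. acomm (\<xi> \<omega>1) (\<xi> \<omega>2) w - \<eta> (wedge (dform \<omega>1) (dform \<omega>2)) w))"

fun iterbr :: "nc list \<Rightarrow> nc" where
  "iterbr [] = (\<lambda>_. 0)"
| "iterbr (b # bs) = foldl acomm b bs"

text \<open>A representative in L_m of psi(T) in B_m = L_m / L_(m+1), via linear extension
  from basis tensors.\<close>
definition psi :: "(form \<Rightarrow> nc) \<Rightarrow> tensor \<Rightarrow> nc" where
  "psi \<xi> T = (\<lambda>w. \<Sum>us\<in>supp T. T us * iterbr (map (\<lambda>u. \<xi> (bas u)) us) w)"

end

theory Submission
  imports Defs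
begin

definition lext :: "('a \<Rightarrow> 'b \<Rightarrow> complex) \<Rightarrow> ('a \<Rightarrow> complex) \<Rightarrow> 'b \<Rightarrow> complex" where
  "lext F \<omega> = (\<lambda>v. \<Sum>u\<in>supp \<omega>. \<omega> u * F u v)"

definition comb :: "'k set \<Rightarrow> ('k \<Rightarrow> complex) \<Rightarrow> ('k \<Rightarrow> 'a) \<Rightarrow> 'a \<Rightarrow> complex" where
  "comb K a X = (\<lambda>x. \<Sum>k\<in>K. a k * (if x = X k then 1 else 0))"

lemma bas_eq: "bas u x = (if x = u then 1 else 0)" by (simp add: bas_def)

lemma supp_comb: "supp (comb K a X) \<subseteq> X ` K"
proof
  fix x assume "x \<in> supp (comb K a X)"
  then have "(\<Sum>k\<in>K. a k * (if x = X k then 1 else 0)) \<noteq> 0" unfolding supp_def comb_def by simp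
  then obtain k where "k \<in> K" "a k * (if x = X k then 1 else 0) \<noteq> 0"
    by (meson sum.neutral)
  then show "x \<in> X ` K" by (cases "x = X k") auto
qed

lemma finite_supp_comb: "finite K \<Longrightarrow> finite (supp (comb K a X))"
  by (rule finite_subset[OF supp_comb]) simp

lemma lext_superset:
  assumes "finite A" "supp \<omega> \<subseteq> A"
  shows "lext F \<omega> v = (\<Sum>u\<in>A. \<omega> u * F u v)"
  unfolding lext_def
  by (rule sum.mono_neutral_left) (use assms in \<open>auto simp: supp_def\<close>)

lemma lext_comb:
  assumes "finite K"
  shows "lext F (comb K a X) v = (\<Sum>k\<in>K. a k * F (X k) v)"
proof -
  have "lext F (comb K a X) v = (\<Sum>x\<in>X ` K. comb K a X x * F x v)"
    using supp_comb[of K a X] assms by (intro lext_superset) auto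
  also have "\<dots> = (\<Sum>x\<in>X ` K. \<Sum>k\<in>K. a k * (if x = X k then 1 else 0) * F x v)"
    by (simp add: comb_def sum_distrib_right)
  also have "\<dots> = (\<Sum>k\<in>K. \<Sum>x\<in>X ` K. a k * (if x = X k then 1 else 0) * F x v)"
    by (rule sum.swap)
  also have "\<dots> = (\<Sum>k\<in>K. a k * F (X k) v)"
  proof (rule sum.cong[OF refl])
    fix k assume k: "k \<in> K"
    have "(\<Sum>x\<in>X ` K. a k * (if x = X k then 1 else 0) * F x v)
        = (\<Sum>x\<in>X ` K. if x = X k then a k * F (X k) v else 0)"
      by (rule sum.cong) auto
    also have "\<dots> = a k * F (X k) v" using k assms by (simp add: sum.delta')
    finally show "(\<Sum>x\<in>X ` K. a k * (if x = X k then 1 else 0) * F x v) = a k * F (X k) v" .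
  qed
  finally show ?thesis .
qed

lemma lext_diff:
  assumes "finite (supp f)" "finite (supp g)"
  shows "lext F (\<lambda>x. f x - g x) v = lext F f v - lext F g v"
proof -
  let ?A = "supp f \<union> supp g"
  have "supp (\<lambda>x. f x - g x) \<subseteq> ?A" by (auto simp: supp_def)
  then have "lext F (\<lambda>x. f x - g x) v = (\<Sum>u\<in>?A. (f u - g u) * F u v)"
    using assms by (intro lext_superset) auto
  also have "\<dots> = (\<Sum>u\<in>?A. f u * F u v) - (\<Sum>u\<in>?A. g u * F u v)"
    by (simp add: left_diff_distrib sum_subtractf)
  also have "(\<Sum>u\<in>?A. f u * F u v) = lext F f v"
    using assms by (intro lext_superset[symmetric]) auto
  also have "(\<Sum>u\<in>?A. g u * F u v) = lext F g v"
    using assms by (intro lext_superset[symmetric]) auto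
  finally show ?thesis .
qed

lemma lext_smult:
  assumes "finite (supp f)"
  shows "lext F (\<lambda>x. c * f x) v = c * lext F f v"
proof -
  have "supp (\<lambda>x. c * f x) \<subseteq> supp f" by (auto simp: supp_def)
  then have "lext F (\<lambda>x. c * f x) v = (\<Sum>u\<in>supp f. (c * f u) * F u v)"
    using assms by (intro lext_superset) auto
  also have "\<dots> = c * lext F f v" by (simp add: lext_def sum_distrib_left mult.assoc)
  finally show ?thesis .
qed

lemma supp_bas: "supp (bas u) = {u}" by (auto simp: supp_def bas_def)

lemma lext_bas: "lext F (bas u) v = F u v"
  by (simp add: lext_def supp_bas) (simp add: bas_def)

lemma comb_id: "finite (supp f) \<Longrightarrow> comb (supp f) f id = f"
proof
  fix x assume f: "finite (supp f)"
  have "comb (supp f) f id x = (\<Sum>k\<in>supp f. if x = k then f k else 0)"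
    by (simp add: comb_def) (rule sum.cong, auto)
  also have "\<dots> = f x" using f by (simp add: sum.delta supp_def)
  finally show "comb (supp f) f id x = f x" .
qed

lemma dform_lext: "dform = lext d_bas"
  by (simp add: dform_def lext_def fun_eq_iff)

lemma wedge_lext: "wedge f g v = lext (\<lambda>x v. lext (\<lambda>y. wedge_bas x y) g v) f v"
  unfolding wedge_def lext_def by (rule sum.cong[OF refl]) (simp add: sum_distrib_left mult.assoc)

lemma phi_lext: "phi T = lext (\<lambda>us. if length us = 2 then wedge (dform (bas (us ! 0))) (dform (bas (us ! 1))) else (\<lambda>_. 0)) T"
  unfolding phi_def lext_def fun_eq_iff by (intro allI sum.cong refl) simp

lemma psi_lext: "psi \<xi> T = lext (\<lambda>us. iterbr (map (\<lambda>u. \<xi> (bas u)) us)) T"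
  by (simp add: psi_def lext_def fun_eq_iff)

definition lt :: "nat set \<Rightarrow> nat \<Rightarrow> nat" where "lt S k = card {s\<in>S. s < k}"
definition gt :: "nat set \<Rightarrow> nat \<Rightarrow> nat" where "gt S k = card {s\<in>S. k < s}"
definition NP :: "nat set \<Rightarrow> nat set \<Rightarrow> nat" where
  "NP A B = card {(s, t). s \<in> A \<and> t \<in> B \<and> t < s}"

lemma lt_gt: "finite S \<Longrightarrow> k \<notin> S \<Longrightarrow> lt S k + gt S k = card S"
proof -
  assume f: "finite S" and k: "k \<notin> S"
  have "S = {s\<in>S. s < k} \<union> {s\<in>S. k < s}" using k by (auto, metis linorder_neqE_nat)
  moreover have "{s\<in>S. s < k} \<inter> {s\<in>S. k < s} = {}" by auto
  ultimately have "card S = card {s\<in>S. s < k} + card {s\<in>S. k < s}"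
    using f by (metis (no_types, lifting) card_Un_disjoint finite_Un)
  then show ?thesis by (simp add: lt_def gt_def)
qed

lemma lt_insert: "finite T \<Longrightarrow> l \<notin> T \<Longrightarrow> lt (insert l T) k = lt T k + (if l < k then 1 else 0)"
proof -
  assume f: "finite T" and l: "l \<notin> T"
  show ?thesis
  proof (cases "l < k")
    case True
    then have "{s\<in>insert l T. s < k} = insert l {s\<in>T. s < k}" by auto
    then show ?thesis using True f l by (simp add: lt_def)
  next
    case False
    then have "{s\<in>insert l T. s < k} = {s\<in>T. s < k}" by auto
    then show ?thesis using False by (simp add: lt_def)
  qed
qed

lemma lt_union: "finite A \<Longrightarrow> finite B \<Longrightarrow> A \<inter> B = {} \<Longrightarrow> lt (A \<union> B) k = lt A k + lt B k"
proof -
  assume f: "finite A" "finite B" and d: "A \<inter> B = {}"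
  have "{s\<in>A \<union> B. s < k} = {s\<in>A. s < k} \<union> {s\<in>B. s < k}" by auto
  moreover have "{s\<in>A. s < k} \<inter> {s\<in>B. s < k} = {}" using d by auto
  ultimately show ?thesis using f by (simp add: lt_def card_Un_disjoint)
qed

lemma finite_pairs: "finite A \<Longrightarrow> finite B \<Longrightarrow> finite {(s, t). s \<in> A \<and> t \<in> B \<and> t < s}"
  by (rule finite_subset[of _ "A \<times> B"]) auto

lemma NP_insert_left:
  assumes "finite A" "finite B" "k \<notin> A"
  shows "NP (insert k A) B = NP A B + lt B k"
proof -
  have e: "{(s, t). s \<in> insert k A \<and> t \<in> B \<and> t < s}
      = {(s, t). s \<in> A \<and> t \<in> B \<and> t < s} \<union> (\<lambda>t. (k, t)) ` {t\<in>B. t < k}" by auto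
  have d: "{(s, t). s \<in> A \<and> t \<in> B \<and> t < s} \<inter> (\<lambda>t. (k, t)) ` {t\<in>B. t < k} = {}"
    using assms(3) by auto
  have c: "card ((\<lambda>t. (k, t)) ` {t\<in>B. t < k}) = card {t\<in>B. t < k}"
    by (rule card_image) (auto simp: inj_on_def)
  show ?thesis unfolding NP_def lt_def e
    using assms finite_pairs[OF assms(1,2)] d c by (simp add: card_Un_disjoint)
qed

lemma NP_insert_right:
  assumes "finite A" "finite B" "l \<notin> B"
  shows "NP A (insert l B) = NP A B + gt A l"
proof -
  have e: "{(s, t). s \<in> A \<and> t \<in> insert l B \<and> t < s}
      = {(s, t). s \<in> A \<and> t \<in> B \<and> t < s} \<union> (\<lambda>s. (s, l)) ` {s\<in>A. l < s}" by auto
  have d: "{(s, t). s \<in> A \<and> t \<in> B \<and> t < s} \<inter> (\<lambda>s. (s, l)) ` {s\<in>A. l < s} = {}"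
    using assms(3) by auto
  have c: "card ((\<lambda>s. (s, l)) ` {s\<in>A. l < s}) = card {s\<in>A. l < s}"
    by (rule card_image) (auto simp: inj_on_def)
  show ?thesis unfolding NP_def gt_def e
    using assms finite_pairs[OF assms(1,2)] d c by (simp add: card_Un_disjoint)
qed

definition sg1 :: "nat \<Rightarrow> nat set \<Rightarrow> complex" where "sg1 k S = (-1) ^ lt S k"
definition sg2 :: "nat set \<Rightarrow> nat set \<Rightarrow> complex" where "sg2 A B = (-1) ^ NP A B"

lemma neg_pow_anti: "even (X + Y + 1) \<Longrightarrow> (-1::complex) ^ X = - ((-1) ^ Y)"
  by (auto simp: minus_one_power_iff)

lemma sign_eq:
  assumes f: "finite S" "finite T" and d: "S \<inter> T = {}" and kl: "k \<notin> S" "k \<notin> T" "l \<notin> S" "l \<notin> T" "k \<noteq> l"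
  shows "sg1 k S * sg1 l T * sg2 (insert k S) (insert l T) = sg1 l T * sg2 S (insert l T) * sg1 k (S \<union> insert l T)"
proof -
  have 1: "NP (insert k S) (insert l T) = NP S T + gt S l + lt T k + (if l < k then 1 else 0)"
  proof -
    have "NP (insert k S) (insert l T) = NP S (insert l T) + lt (insert l T) k"
      using f kl by (intro NP_insert_left) auto
    then show ?thesis using f kl by (simp add: NP_insert_right lt_insert)
  qed
  have 2: "NP S (insert l T) = NP S T + gt S l" using f kl by (simp add: NP_insert_right)
  have 3: "lt (S \<union> insert l T) k = lt S k + lt T k + (if l < k then 1 else 0)"
    using f kl d by (simp add: lt_union lt_insert)
  show ?thesis unfolding sg1_def sg2_def power_add[symmetric] 1 2 3
    by (simp add: ac_simps)
qed

lemma sign_anti: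
  assumes f: "finite S" "finite T" and d: "S \<inter> T = {}" and kl: "k \<notin> S" "k \<notin> T" "l \<notin> S" "l \<notin> T" "k \<noteq> l"
    and ev: "even (card S)"
  shows "sg1 l T * sg2 S (insert l T) * sg1 k (S \<union> insert l T)
       = - (sg1 k T * sg2 S (insert k T) * sg1 l (S \<union> insert k T))"
proof -
  have 2: "NP S (insert l T) = NP S T + gt S l" using f kl by (simp add: NP_insert_right)
  have 3: "lt (S \<union> insert l T) k = lt S k + lt T k + (if l < k then 1 else 0)"
    using f kl d by (simp add: lt_union lt_insert)
  have n2: "NP S (insert k T) = NP S T + gt S k" using f kl by (simp add: NP_insert_right)
  have n3: "lt (S \<union> insert k T) l = lt S l + lt T l + (if k < l then 1 else 0)"
    using f kl d by (simp add: lt_union lt_insert)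
  have a: "lt S k + gt S k = card S" using f kl lt_gt by blast
  have c: "lt S l + gt S l = card S" using f kl lt_gt by blast
  have e: "even ((lt T l + (NP S T + gt S l) + (lt S k + lt T k + (if l < k then 1 else 0)))
     + (lt T k + (NP S T + gt S k) + (lt S l + lt T l + (if k < l then 1 else 0))) + 1)"
  proof -
    obtain q where q: "card S = 2 * q" using ev by blast
    have "(lt T l + (NP S T + gt S l) + (lt S k + lt T k + (if l < k then 1 else 0)))
     + (lt T k + (NP S T + gt S k) + (lt S l + lt T l + (if k < l then 1 else 0))) + 1
     = 2 * (lt T l + NP S T + lt T k + card S + 1)"
    proof -
      show ?thesis
      proof (cases "l < k")
        case True
        then have "\<not> k < l" by simp
        with True show ?thesis using a c by simp
      next
        case False
        then have "k < l" using kl(5) by simp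
        with False show ?thesis using a c by simp
      qed
    qed
    then show ?thesis by (metis dvd_triv_left)
  qed
  show ?thesis unfolding sg1_def sg2_def power_add[symmetric] 2 3 n2 n3
    by (rule neg_pow_anti[OF e])
qed

definition dcoef :: "mono \<Rightarrow> nat \<Rightarrow> complex" where
  "dcoef u k = (if k \<notin> snd u then of_nat (fst u k) * sg1 k (snd u) else 0)"
definition Dk :: "mono \<Rightarrow> nat \<Rightarrow> mono" where
  "Dk u k = ((fst u)(k := fst u k - 1), insert k (snd u))"

lemma d_bas_comb:
  assumes v: "valid_mono n u"
  shows "d_bas u = comb {..<n} (dcoef u) (Dk u)"
proof
  fix x
  let ?P = "\<lambda>k. k \<notin> snd u \<and> 0 < fst u k \<and> x = Dk u k"
  have "comb {..<n} (dcoef u) (Dk u) x = (\<Sum>k\<in>{..<n}. if ?P k then of_nat (fst u k) * sg1 k (snd u) else 0)"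
    unfolding comb_def by (rule sum.cong[OF refl]) (auto simp: dcoef_def)
  also have "\<dots> = (\<Sum>k\<in>{k\<in>{..<n}. ?P k}. of_nat (fst u k) * sg1 k (snd u))"
    by (rule sum.inter_filter[symmetric]) simp
  also have "{k\<in>{..<n}. ?P k} = {k. ?P k}"
    using v unfolding valid_mono_def by (auto simp: not_less[symmetric])
  also have "(\<Sum>k\<in>{k. ?P k}. of_nat (fst u k) * sg1 k (snd u)) = d_bas u x"
    unfolding d_bas_def sg1_def lt_def Dk_def by simp
  finally show "d_bas u x = comb {..<n} (dcoef u) (Dk u) x" ..
qed

lemma dform_bas: "dform (bas u) = d_bas u"
  by (simp add: dform_lext lext_bas fun_eq_iff)

definition Wf :: "mono \<Rightarrow> mono \<Rightarrow> form" where
  "Wf u w = wedge (dform (bas u)) (dform (bas w))"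

lemma Wf_sum:
  assumes "valid_mono n u" "valid_mono n w"
  shows "Wf u w v = (\<Sum>k<n. \<Sum>l<n. dcoef u k * dcoef w l * wedge_bas (Dk u k) (Dk w l) v)"
proof -
  have "Wf u w v = lext (\<lambda>x v. lext (\<lambda>y. wedge_bas x y) (comb {..<n} (dcoef w) (Dk w)) v)
       (comb {..<n} (dcoef u) (Dk u)) v"
    unfolding Wf_def dform_bas d_bas_comb[OF assms(1)] d_bas_comb[OF assms(2)] wedge_lext ..
  also have "\<dots> = (\<Sum>k<n. dcoef u k * (\<Sum>l<n. dcoef w l * wedge_bas (Dk u k) (Dk w l) v))"
    by (simp add: lext_comb)
  finally show ?thesis by (simp add: sum_distrib_left mult.assoc)
qed

definition Zg :: "nat set \<Rightarrow> nat set \<Rightarrow> (nat \<Rightarrow> nat) \<Rightarrow> nat \<Rightarrow> nat \<Rightarrow> mono \<Rightarrow> complex" where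
  "Zg S T f k l v = (if k \<notin> S \<and> l \<notin> T \<and> insert k S \<inter> insert l T = {} \<and>
      v = (\<lambda>m. f m - ((if m = k then 1 else 0) + (if m = l then 1 else 0)), insert k S \<union> insert l T)
     then sg1 k S * sg1 l T * sg2 (insert k S) (insert l T) else 0)"

lemma term_Zg:
  "dcoef u k * dcoef w l * wedge_bas (Dk u k) (Dk w l) v
   = of_nat (fst u k) * of_nat (fst w l) * Zg (snd u) (snd w) (\<lambda>m. fst u m + fst w m) k l v"
proof (cases "fst u k = 0 \<or> fst w l = 0")
  case True then show ?thesis by (auto simp: dcoef_def)
next
  case False
  show ?thesis
  proof (cases "k \<notin> snd u \<and> l \<notin> snd w \<and> insert k (snd u) \<inter> insert l (snd w) = {}")
    case True
    then have kl: "k \<noteq> l" by auto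
    have e: "(\<lambda>m. fst (Dk u k) m + fst (Dk w l) m)
       = (\<lambda>m. fst u m + fst w m - ((if m = k then 1 else 0) + (if m = l then 1 else 0)))"
      using False kl by (auto simp: Dk_def fun_eq_iff)
    show ?thesis using True unfolding wedge_bas_def Zg_def e
      by (simp add: dcoef_def Dk_def sg2_def NP_def)
  next
    case False
    then show ?thesis by (auto simp: dcoef_def Zg_def wedge_bas_def Dk_def)
  qed
qed

lemma Wf_Zg:
  assumes "valid_mono n u" "valid_mono n w"
  shows "Wf u w v = (\<Sum>k<n. \<Sum>l<n. of_nat (fst u k) * of_nat (fst w l) * Zg (snd u) (snd w) (\<lambda>m. fst u m + fst w m) k l v)"
  unfolding Wf_sum[OF assms] term_Zg ..

lemma Zg_anti:
  assumes f: "finite S" "finite T" and ev: "even (card S)"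
  shows "Zg S T f k l v = - Zg S T f l k v"
proof -
  have c: "(k \<notin> S \<and> l \<notin> T \<and> insert k S \<inter> insert l T = {}) \<longleftrightarrow>
           (l \<notin> S \<and> k \<notin> T \<and> insert l S \<inter> insert k T = {})" by auto
  have v: "(\<lambda>m. f m - ((if m = k then 1 else 0) + (if m = l then 1 else 0)), insert k S \<union> insert l T)
         = (\<lambda>m. f m - ((if m = l then 1 else 0) + (if m = k then 1 else 0)), insert l S \<union> insert k T)"
    by (auto simp: fun_eq_iff)
  show ?thesis
  proof (cases "k \<notin> S \<and> l \<notin> T \<and> insert k S \<inter> insert l T = {}")
    case True
    then have h: "S \<inter> T = {}" "k \<notin> S" "k \<notin> T" "l \<notin> S" "l \<notin> T" "k \<noteq> l" by auto
    have s1: "sg1 k S * sg1 l T * sg2 (insert k S) (insert l T) = sg1 l T * sg2 S (insert l T) * sg1 k (S \<union> insert l T)"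
      by (rule sign_eq[OF f h])
    have s2: "sg1 l S * sg1 k T * sg2 (insert l S) (insert k T) = sg1 k T * sg2 S (insert k T) * sg1 l (S \<union> insert k T)"
      by (rule sign_eq[OF f h(1) h(4,5,2,3)]) (use h in auto)
    have s3: "sg1 l T * sg2 S (insert l T) * sg1 k (S \<union> insert l T)
       = - (sg1 k T * sg2 S (insert k T) * sg1 l (S \<union> insert k T))"
      by (rule sign_anti[OF f h ev])
    have s: "sg1 k S * sg1 l T * sg2 (insert k S) (insert l T) = - (sg1 l S * sg1 k T * sg2 (insert l S) (insert k T))"
      unfolding s1 s2 by (rule s3)
    let ?V = "(\<lambda>m. f m - ((if m = k then 1 else 0) + (if m = l then 1 else 0)), insert k S \<union> insert l T)"
    have z1: "Zg S T f k l v = (if v = ?V then sg1 k S * sg1 l T * sg2 (insert k S) (insert l T) else 0)"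
      using True unfolding Zg_def by simp
    have z2: "Zg S T f l k v = (if v = ?V then sg1 l S * sg1 k T * sg2 (insert l S) (insert k T) else 0)"
      using True c unfolding Zg_def v[symmetric] by simp
    show ?thesis unfolding z1 z2 s by simp
  next
    case False
    have z1: "Zg S T f k l v = 0" unfolding Zg_def using False by (intro if_not_P) blast
    have z2: "Zg S T f l k v = 0" unfolding Zg_def using False c by (intro if_not_P) blast
    show ?thesis unfolding z1 z2 by simp
  qed
qed

lemma sum_anti_zero:
  fixes g :: "nat \<Rightarrow> nat \<Rightarrow> complex"
  assumes "\<And>k l. g k l = - g l k"
  shows "(\<Sum>k\<in>A. \<Sum>l\<in>A. g k l) = 0"
proof -
  have "(\<Sum>k\<in>A. \<Sum>l\<in>A. g k l) = (\<Sum>l\<in>A. \<Sum>k\<in>A. g k l)" by (rule sum.swap)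
  also have "\<dots> = (\<Sum>l\<in>A. \<Sum>k\<in>A. - g l k)" by (intro sum.cong refl assms)
  also have "\<dots> = - (\<Sum>k\<in>A. \<Sum>l\<in>A. g k l)" by (simp add: sum_negf)
  finally show ?thesis by simp
qed

definition upm :: "nat \<Rightarrow> mono \<Rightarrow> mono" where
  "upm i u = ((fst u)(i := fst u i + 1), snd u)"

lemma valid_upm: "i < n \<Longrightarrow> valid_mono n u \<Longrightarrow> valid_mono n (upm i u)"
  by (simp add: valid_mono_def upm_def)

lemma snd_upm[simp]: "snd (upm i u) = snd u" by (simp add: upm_def)

lemma valid_finite: "valid_mono n u \<Longrightarrow> finite (snd u)"
  unfolding valid_mono_def by (meson finite_lessThan finite_subset)

lemma core1:
  assumes u: "valid_mono n u" and w: "valid_mono n w" and ev: "even (card (snd u))"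
    and ij: "i < n" "j < n"
  shows "Wf (upm i (upm j u)) w v - Wf (upm i u) (upm j w) v - Wf (upm j u) (upm i w) v
         + Wf u (upm i (upm j w)) v = 0"
proof -
  define F where "F = (\<lambda>m. fst u m + fst w m + (if m = i then 1 else 0) + (if m = j then 1 else 0))"
  define S where "S = snd u"
  define T where "T = snd w"
  have fS: "finite S" "finite T" using u w valid_finite S_def T_def by auto
  have e1: "(\<lambda>m. fst (upm i (upm j u)) m + fst w m) = F" by (auto simp: F_def upm_def fun_eq_iff)
  have e2: "(\<lambda>m. fst (upm i u) m + fst (upm j w) m) = F" by (auto simp: F_def upm_def fun_eq_iff)
  have e3: "(\<lambda>m. fst (upm j u) m + fst (upm i w) m) = F" by (auto simp: F_def upm_def fun_eq_iff)
  have e4: "(\<lambda>m. fst u m + fst (upm i (upm j w)) m) = F" by (auto simp: F_def upm_def fun_eq_iff)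
  have vs: "valid_mono n (upm i (upm j u))" "valid_mono n (upm i u)" "valid_mono n (upm j u)"
    "valid_mono n (upm j w)" "valid_mono n (upm i w)" "valid_mono n (upm i (upm j w))"
    using u w ij by (simp_all add: valid_upm)
  define P :: "nat \<Rightarrow> nat \<Rightarrow> complex" where
    "P = (\<lambda>k l. - ((if k = i \<and> l = j then 1 else 0) + (if k = j \<and> l = i then 1 else 0)))"
  have P: "of_nat (fst (upm i (upm j u)) k) * of_nat (fst w l) - of_nat (fst (upm i u) k) * of_nat (fst (upm j w) l)
     - of_nat (fst (upm j u) k) * of_nat (fst (upm i w) l) + of_nat (fst u k) * of_nat (fst (upm i (upm j w)) l)
     = P k l" for k l
    unfolding P_def upm_def
    by (cases "k = i"; cases "k = j"; cases "l = i"; cases "l = j"; simp add: algebra_simps)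
  have "Wf (upm i (upm j u)) w v - Wf (upm i u) (upm j w) v - Wf (upm j u) (upm i w) v
         + Wf u (upm i (upm j w)) v
     = (\<Sum>k<n. \<Sum>l<n. (of_nat (fst (upm i (upm j u)) k) * of_nat (fst w l) - of_nat (fst (upm i u) k) * of_nat (fst (upm j w) l)
     - of_nat (fst (upm j u) k) * of_nat (fst (upm i w) l) + of_nat (fst u k) * of_nat (fst (upm i (upm j w)) l)) * Zg S T F k l v)"
    unfolding Wf_Zg[OF vs(1) w] Wf_Zg[OF vs(2) vs(4)] Wf_Zg[OF vs(3) vs(5)] Wf_Zg[OF u vs(6)]
      e1 e2 e3 e4 snd_upm S_def[symmetric] T_def[symmetric]
    by (simp add: sum_subtractf sum.distrib algebra_simps)
  also have "\<dots> = (\<Sum>k<n. \<Sum>l<n. P k l * Zg S T F k l v)" unfolding P ..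
  also have "\<dots> = 0"
  proof (rule sum_anti_zero)
    fix k l
    have h1: "P k l = P l k" unfolding P_def by (cases "k = i"; cases "l = j"; cases "k = j"; cases "l = i"; simp)
    have h2: "Zg S T F k l v = - Zg S T F l k v" using fS ev S_def by (intro Zg_anti) auto
    show "P k l * Zg S T F k l v = - (P l k * Zg S T F l k v)" using h1 h2 by (metis mult_minus_right)
  qed
  finally show ?thesis .
qed

definition incL :: "nat \<Rightarrow> nat \<Rightarrow> mono list \<Rightarrow> mono list" where
  "incL i p L = L[p := upm i (L ! p)]"

lemma length_incL[simp]: "length (incL i p L) = length L" by (simp add: incL_def)
lemma incL0[simp]: "incL i 0 (u # L) = upm i u # L" by (simp add: incL_def)
lemma incL1[simp]: "incL i 1 (u # w # L) = u # upm i w # L" by (simp add: incL_def)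

lemma incL1'[simp]: "incL i (Suc 0) (u # w # L) = u # upm i w # L" by (simp add: incL_def)

lemma incL_iff:
  assumes p: "p < length L"
  shows "(us = incL i p L) \<longleftrightarrow> (p < length us \<and> 0 < fst (us ! p) i \<and>
     us[p := ((fst (us ! p))(i := fst (us ! p) i - 1), snd (us ! p))] = L)"
proof
  assume us: "us = incL i p L"
  have l: "length us = length L" using us by simp
  have up: "us ! p = upm i (L ! p)" using us p by (simp add: incL_def)
  have d: "((fst (us ! p))(i := fst (us ! p) i - 1), snd (us ! p)) = L ! p"
    unfolding up by (simp add: upm_def)
  show "p < length us \<and> 0 < fst (us ! p) i \<and>
     us[p := ((fst (us ! p))(i := fst (us ! p) i - 1), snd (us ! p))] = L"
    using p l up d us by (simp add: upm_def incL_def)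
next
  assume h: "p < length us \<and> 0 < fst (us ! p) i \<and>
     us[p := ((fst (us ! p))(i := fst (us ! p) i - 1), snd (us ! p))] = L"
  let ?d = "((fst (us ! p))(i := fst (us ! p) i - 1), snd (us ! p))"
  have Lp: "L ! p = ?d" using h by auto
  have "upm i ?d = us ! p" using h by (simp add: upm_def fun_eq_iff prod_eq_iff)
  then have "incL i p L = (us[p := ?d])[p := us ! p]" using h Lp by (simp add: incL_def)
  also have "\<dots> = us" by simp
  finally show "us = incL i p L" ..
qed

lemma xact_comb:
  assumes "\<forall>k\<in>K. p < length (X k)"
  shows "xact i p (comb K a X) = comb K a (\<lambda>k. incL i p (X k))"
proof
  fix us
  have "xact i p (comb K a X) us = (\<Sum>k\<in>K. a k * (if p < length us \<and> 0 < fst (us ! p) i \<and>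
     us[p := ((fst (us ! p))(i := fst (us ! p) i - 1), snd (us ! p))] = X k then 1 else 0))"
    unfolding xact_def comb_def by (cases "p < length us \<and> 0 < fst (us ! p) i") auto
  also have "\<dots> = comb K a (\<lambda>k. incL i p (X k)) us"
    unfolding comb_def using assms by (intro sum.cong refl) (simp add: incL_iff)
  finally show "xact i p (comb K a X) us = comb K a (\<lambda>k. incL i p (X k)) us" .
qed

lemma xact_diff: "xact i p (\<lambda>us. f us - g us) = (\<lambda>us. xact i p f us - xact i p g us)"
  by (simp add: xact_def fun_eq_iff)

lemma X_expand:
  assumes "\<forall>k\<in>K. 1 < length (X k)"
  shows "xdiff i (xdiff j (comb K a X)) = (\<lambda>us.
     (comb K a (\<lambda>k. incL i 0 (incL j 0 (X k))) us - comb K a (\<lambda>k. incL i 0 (incL j 1 (X k))) us)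
   - (comb K a (\<lambda>k. incL i 1 (incL j 0 (X k))) us - comb K a (\<lambda>k. incL i 1 (incL j 1 (X k))) us))"
proof -
  have a0: "\<forall>k\<in>K. 0 < length (X k)" "\<forall>k\<in>K. 1 < length (X k)" using assms by auto
  have a1: "\<forall>k\<in>K. 0 < length (incL j q (X k))" "\<forall>k\<in>K. 1 < length (incL j q (X k))" for q
    using assms by auto
  show ?thesis
    unfolding xdiff_def xact_comb[OF a0(1)] xact_comb[OF a0(2)] xact_diff
      xact_comb[OF a1(1)] xact_comb[OF a1(2)] ..
qed

lemma finite_supp_diff: "finite (supp f) \<Longrightarrow> finite (supp g) \<Longrightarrow> finite (supp (\<lambda>x. f x - g x))"
  by (rule finite_subset[of _ "supp f \<union> supp g"]) (auto simp: supp_def)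

lemma lext_X:
  assumes f: "finite K" and l: "\<forall>k\<in>K. 1 < length (X k)"
  shows "lext F (xdiff i (xdiff j (comb K a X))) v = (\<Sum>k\<in>K. a k *
     ((F (incL i 0 (incL j 0 (X k))) v - F (incL i 0 (incL j 1 (X k))) v)
      - (F (incL i 1 (incL j 0 (X k))) v - F (incL i 1 (incL j 1 (X k))) v)))"
  unfolding X_expand[OF l]
  by (simp add: lext_diff finite_supp_diff finite_supp_comb f lext_comb sum_subtractf right_diff_distrib)

lemma tens2_comb:
  assumes fin: "finite (supp \<omega>1)" "finite (supp \<omega>2)"
  shows "tens [\<omega>1, \<omega>2] = comb (supp \<omega>1 \<times> supp \<omega>2) (\<lambda>(u, w). \<omega>1 u * \<omega>2 w) (\<lambda>(u, w). [u, w])"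
proof
  fix us
  show "tens [\<omega>1, \<omega>2] us = comb (supp \<omega>1 \<times> supp \<omega>2) (\<lambda>(u, w). \<omega>1 u * \<omega>2 w) (\<lambda>(u, w). [u, w]) us"
  proof (cases "length us = 2")
    case True
    then obtain x y where us: "us = [x, y]"
      by (metis (no_types, lifting) One_nat_def Suc_length_conv length_0_conv numeral_2_eq_2)
    have "comb (supp \<omega>1 \<times> supp \<omega>2) (\<lambda>(u, w). \<omega>1 u * \<omega>2 w) (\<lambda>(u, w). [u, w]) us
       = (\<Sum>p\<in>supp \<omega>1 \<times> supp \<omega>2. if p = (x, y) then \<omega>1 x * \<omega>2 y else 0)"
      unfolding comb_def us by (intro sum.cong refl) auto
    also have "\<dots> = \<omega>1 x * \<omega>2 y"
      using fin by (simp add: sum.delta supp_def)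
    finally show ?thesis unfolding us tens_def by (simp add: lessThan_Suc)
  next
    case False
    have "tens [\<omega>1, \<omega>2] us = 0" using False by (simp add: tens_def)
    moreover have "comb (supp \<omega>1 \<times> supp \<omega>2) (\<lambda>(u, w). \<omega>1 u * \<omega>2 w) (\<lambda>(u, w). [u, w]) us = 0"
      unfolding comb_def by (rule sum.neutral) (use False in \<open>auto split: prod.splits\<close>)
    ultimately show ?thesis by simp
  qed
qed

lemma part1:
  assumes ij: "i < n" "j < n" and e: "even_form n \<omega>1" "even_form n \<omega>2"
  shows "phi (xdiff i (xdiff j (tens [\<omega>1, \<omega>2]))) = (\<lambda>_. 0)"
proof
  fix v
  let ?K = "supp \<omega>1 \<times> supp \<omega>2"
  have fin: "finite (supp \<omega>1)" "finite (supp \<omega>2)" using e by (simp_all add: even_form_def is_form_def)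
  then have fK: "finite ?K" by simp
  have lK: "\<forall>k\<in>?K. 1 < length ((\<lambda>(u, w). [u, w]) k)" by auto
  let ?G = "\<lambda>us. if length us = 2 then wedge (dform (bas (us ! 0))) (dform (bas (us ! 1))) else (\<lambda>_. 0)"
  have G2: "?G [a, b] = Wf a b" for a b by (simp add: Wf_def)
  have "phi (xdiff i (xdiff j (tens [\<omega>1, \<omega>2]))) v = (\<Sum>k\<in>?K. (\<lambda>(u, w). \<omega>1 u * \<omega>2 w) k *
     ((?G (incL i 0 (incL j 0 ((\<lambda>(u, w). [u, w]) k))) v - ?G (incL i 0 (incL j 1 ((\<lambda>(u, w). [u, w]) k))) v)
      - (?G (incL i 1 (incL j 0 ((\<lambda>(u, w). [u, w]) k))) v - ?G (incL i 1 (incL j 1 ((\<lambda>(u, w). [u, w]) k))) v)))"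
    unfolding phi_lext tens2_comb[OF fin] by (rule lext_X[OF fK lK])
  also have "\<dots> = 0"
  proof (rule sum.neutral, rule ballI)
    fix k assume k: "k \<in> ?K"
    obtain u w where kk: "k = (u, w)" by (rule prod.exhaust)
    have u: "valid_mono n u" "even (card (snd u))" using k e kk
      by (auto simp: even_form_def is_form_def)
    have w: "valid_mono n w" using k e kk by (auto simp: even_form_def is_form_def)
    have c: "Wf (upm i (upm j u)) w v - Wf (upm i u) (upm j w) v - Wf (upm j u) (upm i w) v
         + Wf u (upm i (upm j w)) v = 0" by (rule core1[OF u(1) w u(2) ij])
    show "(\<lambda>(u, w). \<omega>1 u * \<omega>2 w) k *
     ((?G (incL i 0 (incL j 0 ((\<lambda>(u, w). [u, w]) k))) v - ?G (incL i 0 (incL j 1 ((\<lambda>(u, w). [u, w]) k))) v)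
      - (?G (incL i 1 (incL j 0 ((\<lambda>(u, w). [u, w]) k))) v - ?G (incL i 1 (incL j 1 ((\<lambda>(u, w). [u, w]) k))) v)) = 0"
      unfolding kk using c by (simp add: Wf_def algebra_simps)
  qed
  finally show "phi (xdiff i (xdiff j (tens [\<omega>1, \<omega>2]))) v = 0" .
qed

definition wc :: "mono \<Rightarrow> mono \<Rightarrow> complex" where
  "wc u y = (if snd u \<inter> snd y = {} then sg2 (snd u) (snd y) else 0)"
definition mulm :: "mono \<Rightarrow> mono \<Rightarrow> mono" where
  "mulm u y = ((\<lambda>k. fst u k + fst y k), snd u \<union> snd y)"

lemma wedge_bas_eq: "wedge_bas u y v = wc u y * bas (mulm u y) v"
  by (simp add: wedge_bas_def wc_def mulm_def bas_def sg2_def NP_def)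

definition nuf :: "nat \<Rightarrow> mono \<Rightarrow> mono \<Rightarrow> form" where
  "nuf n u w = comb {..<n} (\<lambda>l. dcoef w l * wc u (Dk w l)) (\<lambda>l. mulm u (Dk w l))"

lemma valid_Dk: "valid_mono n w \<Longrightarrow> l < n \<Longrightarrow> valid_mono n (Dk w l)"
  by (simp add: valid_mono_def Dk_def)

lemma valid_mulm: "valid_mono n u \<Longrightarrow> valid_mono n y \<Longrightarrow> valid_mono n (mulm u y)"
  by (simp add: valid_mono_def mulm_def)

lemma is_form_nuf:
  assumes "valid_mono n u" "valid_mono n w"
  shows "is_form n (nuf n u w)"
  unfolding is_form_def nuf_def
proof
  show "finite (supp (comb {..<n} (\<lambda>l. dcoef w l * wc u (Dk w l)) (\<lambda>l. mulm u (Dk w l))))"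
    by (rule finite_supp_comb) simp
  show "\<forall>x\<in>supp (comb {..<n} (\<lambda>l. dcoef w l * wc u (Dk w l)) (\<lambda>l. mulm u (Dk w l))). valid_mono n x"
    using supp_comb[of "{..<n}" "\<lambda>l. dcoef w l * wc u (Dk w l)" "\<lambda>l. mulm u (Dk w l)"]
      assms valid_Dk valid_mulm by blast
qed

lemma dform_nuf:
  assumes u: "valid_mono n u" and w: "valid_mono n w"
  shows "dform (nuf n u w) v = (\<Sum>l<n. \<Sum>k<n. dcoef w l * wc u (Dk w l) *
            (dcoef (mulm u (Dk w l)) k * (if v = Dk (mulm u (Dk w l)) k then 1 else 0)))"
proof -
  have "dform (nuf n u w) v = (\<Sum>l<n. dcoef w l * wc u (Dk w l) * d_bas (mulm u (Dk w l)) v)"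
    unfolding dform_lext nuf_def by (simp add: lext_comb)
  also have "\<dots> = (\<Sum>l<n. \<Sum>k<n. dcoef w l * wc u (Dk w l) *
            (dcoef (mulm u (Dk w l)) k * (if v = Dk (mulm u (Dk w l)) k then 1 else 0)))"
  proof (rule sum.cong[OF refl])
    fix l assume "l \<in> {..<n}"
    then have vm: "valid_mono n (mulm u (Dk w l))" using u w valid_Dk valid_mulm by auto
    show "dcoef w l * wc u (Dk w l) * d_bas (mulm u (Dk w l)) v = (\<Sum>k<n. dcoef w l * wc u (Dk w l) *
            (dcoef (mulm u (Dk w l)) k * (if v = Dk (mulm u (Dk w l)) k then 1 else 0)))"
      unfolding d_bas_comb[OF vm] comb_def by (simp add: sum_distrib_left)
  qed
  finally show ?thesis .
qed

lemma T2:
  assumes fS: "finite (snd u)" and fT: "finite (snd w)"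
  shows "dcoef w l * wc u (Dk w l) * (dcoef (mulm u (Dk w l)) k * (if v = Dk (mulm u (Dk w l)) k then 1 else 0))
    = of_nat (fst w l) * (of_nat (fst u k) + of_nat (fst w k)) * Zg (snd u) (snd w) (\<lambda>m. fst u m + fst w m) k l v"
proof -
  define S where "S = snd u"
  define T where "T = snd w"
  have sDk: "snd (Dk w l) = insert l T" by (simp add: Dk_def T_def)
  have smul: "snd (mulm u (Dk w l)) = S \<union> insert l T" by (simp add: mulm_def Dk_def S_def T_def)
  show ?thesis
  proof (cases "fst w l = 0 \<or> l \<in> T \<or> S \<inter> insert l T \<noteq> {}")
    case True
    have L: "dcoef w l * wc u (Dk w l) = 0"
      using True by (auto simp: dcoef_def wc_def sDk S_def T_def)
    have R: "of_nat (fst w l) * (of_nat (fst u k) + of_nat (fst w k)) * Zg (snd u) (snd w) (\<lambda>m. fst u m + fst w m) k l v = 0"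
      using True unfolding Zg_def S_def T_def by auto
    show ?thesis unfolding L R by simp
  next
    case False
    then have bl: "0 < fst w l" and lT: "l \<notin> T" and dis: "S \<inter> insert l T = {}" by auto
    show ?thesis
    proof (cases "k \<in> S \<union> insert l T")
      case True
      have L: "dcoef (mulm u (Dk w l)) k = 0" using True by (simp add: dcoef_def smul)
      have R: "Zg (snd u) (snd w) (\<lambda>m. fst u m + fst w m) k l v = 0"
        using True unfolding Zg_def S_def T_def by auto
      show ?thesis using L R by simp
    next
      case False
      then have kl: "k \<noteq> l" and kS: "k \<notin> S" and kT: "k \<notin> T" by auto
      have fm: "fst (mulm u (Dk w l)) k = fst u k + fst w k" using kl by (simp add: mulm_def Dk_def)
      show ?thesis
      proof (cases "fst u k + fst w k = 0")
        case True
        have L: "dcoef (mulm u (Dk w l)) k = 0" using True fm by (simp add: dcoef_def)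
        show ?thesis using L True by simp
      next
        case False
        have eqv: "Dk (mulm u (Dk w l)) k = (\<lambda>m. fst u m + fst w m - ((if m = k then 1 else 0) + (if m = l then 1 else 0)), insert k S \<union> insert l T)"
          using False kl bl by (auto simp: Dk_def mulm_def S_def T_def fun_eq_iff)
        have cond: "k \<notin> snd u \<and> l \<notin> snd w \<and> insert k (snd u) \<inter> insert l (snd w) = {}"
          using kS kT kl lT dis S_def T_def by auto
        have sg: "sg1 k S * sg1 l T * sg2 (insert k S) (insert l T) = sg1 l T * sg2 S (insert l T) * sg1 k (S \<union> insert l T)"
          by (rule sign_eq) (use fS fT S_def T_def dis kS kT lT kl in auto)
        have Z: "Zg (snd u) (snd w) (\<lambda>m. fst u m + fst w m) k l v
           = (if v = Dk (mulm u (Dk w l)) k then sg1 l T * sg2 S (insert l T) * sg1 k (S \<union> insert l T) else 0)"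
          unfolding eqv Zg_def using cond sg by (simp add: S_def T_def)
        have L1: "dcoef w l = of_nat (fst w l) * sg1 l T" using lT by (simp add: dcoef_def T_def)
        have L2: "wc u (Dk w l) = sg2 S (insert l T)" using dis by (simp add: wc_def sDk S_def)
        have L3: "dcoef (mulm u (Dk w l)) k = of_nat (fst u k + fst w k) * sg1 k (S \<union> insert l T)"
          using kS kT kl by (simp add: dcoef_def smul fm)
        show ?thesis unfolding Z L1 L2 L3 by (simp add: algebra_simps)
      qed
    qed
  qed
qed

lemma Wf_exact:
  assumes u: "valid_mono n u" and w: "valid_mono n w" and ev: "even (card (snd u))"
  shows "Wf u w = dform (nuf n u w)"
proof
  fix v
  let ?Z = "\<lambda>k l. Zg (snd u) (snd w) (\<lambda>m. fst u m + fst w m) k l v"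
  have fS: "finite (snd u)" "finite (snd w)" using u w valid_finite by auto
  have "dform (nuf n u w) v = (\<Sum>l<n. \<Sum>k<n. of_nat (fst w l) * (of_nat (fst u k) + of_nat (fst w k)) * ?Z k l)"
    unfolding dform_nuf[OF u w] T2[OF fS] ..
  also have "\<dots> = (\<Sum>k<n. \<Sum>l<n. of_nat (fst w l) * (of_nat (fst u k) + of_nat (fst w k)) * ?Z k l)"
    by (rule sum.swap)
  finally have D: "dform (nuf n u w) v = (\<Sum>k<n. \<Sum>l<n. of_nat (fst w l) * (of_nat (fst u k) + of_nat (fst w k)) * ?Z k l)" .
  have W: "Wf u w v = (\<Sum>k<n. \<Sum>l<n. of_nat (fst u k) * of_nat (fst w l) * ?Z k l)"
    by (rule Wf_Zg[OF u w])
  have "Wf u w v - dform (nuf n u w) v = (\<Sum>k<n. \<Sum>l<n. - (of_nat (fst w l) * of_nat (fst w k) * ?Z k l))"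
    unfolding W D by (simp add: sum_subtractf[symmetric] algebra_simps)
  also have "\<dots> = 0"
  proof (rule sum_anti_zero)
    fix k l
    have h: "?Z k l = - ?Z l k" using fS ev by (intro Zg_anti) auto
    show "- (of_nat (fst w l) * of_nat (fst w k) * ?Z k l) = - (- (of_nat (fst w k) * of_nat (fst w l) * ?Z l k))"
      unfolding h by simp
  qed
  finally show "Wf u w v = dform (nuf n u w) v" by simp
qed

lemma Wf_supp:
  assumes u: "valid_mono n u" and w: "valid_mono n w" and ev: "even (card (snd u))" "even (card (snd w))"
    and nz: "Wf u w v \<noteq> 0"
  shows "snd v \<noteq> {} \<and> even (card (snd v))"
proof -
  have fS: "finite (snd u)" "finite (snd w)" using u w valid_finite by auto
  from nz obtain k l where "of_nat (fst u k) * of_nat (fst w l) * Zg (snd u) (snd w) (\<lambda>m. fst u m + fst w m) k l v \<noteq> 0"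
    unfolding Wf_Zg[OF u w] by (meson sum.neutral)
  then have "Zg (snd u) (snd w) (\<lambda>m. fst u m + fst w m) k l v \<noteq> 0" by auto
  then have c: "k \<notin> snd u" "l \<notin> snd w" "insert k (snd u) \<inter> insert l (snd w) = {}"
      "snd v = insert k (snd u) \<union> insert l (snd w)"
    unfolding Zg_def by (auto split: if_splits)
  have "card (snd v) = card (insert k (snd u)) + card (insert l (snd w))"
    unfolding c(4) by (rule card_Un_disjoint) (use fS c(3) in auto)
  also have "\<dots> = card (snd u) + card (snd w) + 2" using fS c(1,2) by simp
  finally show ?thesis using ev c(4) by auto
qed

lemma exact_pos_Wf:
  assumes u: "valid_mono n u" and w: "valid_mono n w" and ev: "even (card (snd u))" "even (card (snd w))"
  shows "exact_pos n (Wf u w)"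
  unfolding exact_pos_def exact_form_def
proof
  show "\<exists>\<nu>. is_form n \<nu> \<and> Wf u w = dform \<nu>"
    using is_form_nuf[OF u w] Wf_exact[OF u w ev(1)] by blast
  show "\<forall>v\<in>supp (Wf u w). snd v \<noteq> {} \<and> even (card (snd v))"
    using Wf_supp[OF u w ev] by (auto simp: supp_def)
qed

lemma lcs_ge1: "lcs n k p \<Longrightarrow> 1 \<le> k"
  by (induction rule: lcs.induct) auto

lemma lcs_cong: "lcs n k p \<Longrightarrow> p = q \<Longrightarrow> lcs n k q" by simp

lemma lcs_diff: "lcs n k p \<Longrightarrow> lcs n k q \<Longrightarrow> lcs n k (\<lambda>w. p w - q w)"
proof -
  assume p: "lcs n k p" and q: "lcs n k q"
  have "lcs n k (\<lambda>w. p w + (\<lambda>w. (-1) * q w) w)" by (rule lcs.add[OF p lcs.smult[OF q]])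
  then show ?thesis by simp
qed

lemma lcs_add: "lcs n k p \<Longrightarrow> lcs n k q \<Longrightarrow> lcs n k (\<lambda>w. p w + q w)"
  by (rule lcs.add)

lemma lcs_sum:
  assumes "finite A" "1 \<le> k" "\<forall>x\<in>A. lcs n k (f x)"
  shows "lcs n k (\<lambda>w. \<Sum>x\<in>A. f x w)"
  using assms
proof (induction A rule: finite_induct)
  case empty
  then show ?case using lcs.zero[of k n] by simp
next
  case (insert x F)
  have "lcs n k (\<lambda>w. f x w + (\<lambda>w. \<Sum>x\<in>F. f x w) w)"
    using insert by (intro lcs.add) auto
  then show ?case using insert by simp
qed

lemma amul_diff: "amul (\<lambda>w. p w - q w) r = (\<lambda>w. amul p r w - amul q r w)"
  by (simp add: amul_def fun_eq_iff left_diff_distrib sum_subtractf)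

lemma acomm_diff: "acomm (\<lambda>w. p w - q w) r = (\<lambda>w. acomm p r w - acomm q r w)"
proof -
  have "amul r (\<lambda>w. p w - q w) = (\<lambda>w. amul r p w - amul r q w)"
    by (simp add: amul_def fun_eq_iff right_diff_distrib sum_subtractf)
  then show ?thesis by (simp add: acomm_def amul_diff fun_eq_iff)
qed

lemma foldl_acomm_diff: "foldl acomm (\<lambda>w. p w - q w) R = (\<lambda>w. foldl acomm p R w - foldl acomm q R w)"
  by (induction R arbitrary: p q) (simp_all add: acomm_diff)

lemma lcs_foldl:
  assumes "lcs n k b" "\<forall>r\<in>set R. is_alg n r"
  shows "lcs n (k + length R) (foldl acomm b R)"
  using assms
proof (induction R arbitrary: b k)
  case Nil
  then show ?case by simp
next
  case (Cons r R)
  have k: "1 \<le> k" using Cons.prems(1) by (rule lcs_ge1)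
  have "lcs n (Suc k) (acomm r b)" using Cons.prems k by (intro lcs.comm) auto
  then have "lcs n (Suc k) (\<lambda>w. (-1) * acomm r b w)" by (rule lcs.smult)
  moreover have "(\<lambda>w. (-1) * acomm r b w) = acomm b r" by (simp add: acomm_def fun_eq_iff)
  ultimately have "lcs n (Suc k) (acomm b r)" by simp
  from Cons.IH[OF this] Cons.prems(2) have "lcs n (Suc k + length R) (foldl acomm (acomm b r) R)" by simp
  then show ?case by simp
qed

lemma supp_zero: "supp (\<lambda>_. 0) = {}" by (simp add: supp_def)

lemma exact_pos_zero: "exact_pos n (\<lambda>_. 0)"
proof -
  have "dform (\<lambda>_. 0) = (\<lambda>_. 0)" by (simp add: dform_def supp_zero)
  moreover have "is_form n (\<lambda>_. 0)" by (simp add: is_form_def supp_zero)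
  ultimately show ?thesis unfolding exact_pos_def exact_form_def supp_zero by auto
qed

lemma exact_pos_diff:
  assumes a: "exact_pos n a" and b: "exact_pos n b"
  shows "exact_pos n (\<lambda>v. a v - b v)"
proof -
  obtain \<nu>1 where n1: "is_form n \<nu>1" "a = dform \<nu>1" using a by (auto simp: exact_pos_def exact_form_def)
  obtain \<nu>2 where n2: "is_form n \<nu>2" "b = dform \<nu>2" using b by (auto simp: exact_pos_def exact_form_def)
  have f: "finite (supp \<nu>1)" "finite (supp \<nu>2)" using n1 n2 by (auto simp: is_form_def)
  have D: "dform (\<lambda>x. \<nu>1 x - \<nu>2 x) = (\<lambda>v. a v - b v)"
    unfolding n1(2) n2(2) dform_lext by (simp add: fun_eq_iff lext_diff f)
  have I: "is_form n (\<lambda>x. \<nu>1 x - \<nu>2 x)"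
  proof -
    have s: "supp (\<lambda>x. \<nu>1 x - \<nu>2 x) \<subseteq> supp \<nu>1 \<union> supp \<nu>2" by (auto simp: supp_def)
    have "finite (supp (\<lambda>x. \<nu>1 x - \<nu>2 x))" using s f by (meson finite_UnI finite_subset)
    moreover have "\<forall>u\<in>supp (\<lambda>x. \<nu>1 x - \<nu>2 x). valid_mono n u"
    proof
      fix u assume "u \<in> supp (\<lambda>x. \<nu>1 x - \<nu>2 x)"
      then have "u \<in> supp \<nu>1 \<or> u \<in> supp \<nu>2" using s by blast
      then show "valid_mono n u" using n1(1) n2(1) unfolding is_form_def by blast
    qed
    ultimately show ?thesis unfolding is_form_def by blast
  qed
  have P: "\<forall>v\<in>supp (\<lambda>v. a v - b v). snd v \<noteq> {} \<and> even (card (snd v))"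
  proof
    fix v assume "v \<in> supp (\<lambda>v. a v - b v)"
    then have "v \<in> supp a \<or> v \<in> supp b" by (auto simp: supp_def)
    then show "snd v \<noteq> {} \<and> even (card (snd v))" using a b by (auto simp: exact_pos_def)
  qed
  have "\<exists>\<nu>. is_form n \<nu> \<and> (\<lambda>v. a v - b v) = dform \<nu>"
    using D I by (intro exI[of _ "\<lambda>x. \<nu>1 x - \<nu>2 x"]) simp
  then show ?thesis unfolding exact_pos_def exact_form_def using P by blast
qed

lemma FS_xi: "FS_data n \<xi> \<eta> \<Longrightarrow> \<forall>\<omega>. even_form n \<omega> \<longrightarrow> is_alg n (\<xi> \<omega>)"
  unfolding FS_data_def by (elim conjE) assumption

lemma FS_add: "FS_data n \<xi> \<eta> \<Longrightarrow> \<forall>\<omega> \<omega>'. exact_pos n \<omega> \<longrightarrow> exact_pos n \<omega>' \<longrightarrow>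
        lcs n 3 (\<lambda>w. \<eta> (\<lambda>v. \<omega> v + \<omega>' v) w - \<eta> \<omega> w - \<eta> \<omega>' w)"
  unfolding FS_data_def by (elim conjE) assumption

lemma FS_smult: "FS_data n \<xi> \<eta> \<Longrightarrow> \<forall>c \<omega>. exact_pos n \<omega> \<longrightarrow> lcs n 3 (\<lambda>w. \<eta> (\<lambda>v. c * \<omega> v) w - c * \<eta> \<omega> w)"
  unfolding FS_data_def by (elim conjE) assumption

lemma FS_br: "FS_data n \<xi> \<eta> \<Longrightarrow> \<forall>\<omega>1 \<omega>2. even_form n \<omega>1 \<longrightarrow> even_form n \<omega>2 \<longrightarrow>
        lcs n 3 (\<lambda>w. acomm (\<xi> \<omega>1) (\<xi> \<omega>2) w - \<eta> (wedge (dform \<omega>1) (dform \<omega>2)) w)"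
  unfolding FS_data_def by (elim conjE) assumption

lemma eta_zero: "FS_data n \<xi> \<eta> \<Longrightarrow> lcs n 3 (\<eta> (\<lambda>_. 0))"
proof -
  assume F: "FS_data n \<xi> \<eta>"
  then have "lcs n 3 (\<lambda>w. \<eta> (\<lambda>v. 0 * (\<lambda>_. 0) v) w - 0 * \<eta> (\<lambda>_. 0) w)"
    using FS_smult[OF F] exact_pos_zero by blast
  then show ?thesis by simp
qed

lemma eta_diff:
  assumes F: "FS_data n \<xi> \<eta>" and a: "exact_pos n a" and b: "exact_pos n b"
  shows "lcs n 3 (\<lambda>w. \<eta> (\<lambda>v. a v - b v) w - (\<eta> a w - \<eta> b w))"
proof -
  have ab: "exact_pos n (\<lambda>v. a v - b v)" by (rule exact_pos_diff[OF a b])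
  have "lcs n 3 (\<lambda>w. \<eta> (\<lambda>v. (\<lambda>v. a v - b v) v + b v) w - \<eta> (\<lambda>v. a v - b v) w - \<eta> b w)"
    using FS_add[OF F] ab b by blast
  then have "lcs n 3 (\<lambda>w. \<eta> a w - \<eta> (\<lambda>v. a v - b v) w - \<eta> b w)" by simp
  then have "lcs n 3 (\<lambda>w. (-1) * (\<lambda>w. \<eta> a w - \<eta> (\<lambda>v. a v - b v) w - \<eta> b w) w)" by (rule lcs.smult)
  then show ?thesis by (rule lcs_cong) (simp add: fun_eq_iff algebra_simps)
qed

lemma even_form_bas: "valid_mono n u \<Longrightarrow> even (card (snd u)) \<Longrightarrow> even_form n (bas u)"
  by (simp add: even_form_def is_form_def supp_bas)

lemma per_L:
  assumes F: "FS_data n \<xi> \<eta>" and ij: "i < n" "j < n"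
    and u: "valid_mono n u" "even (card (snd u))" and w: "valid_mono n w" "even (card (snd w))"
    and rest: "\<forall>r\<in>set rest. valid_mono n r \<and> even (card (snd r))"
  shows "lcs n (Suc (length (u # w # rest))) (\<lambda>x.
      (iterbr (map (\<lambda>u. \<xi> (bas u)) (incL i 0 (incL j 0 (u # w # rest)))) x
       - iterbr (map (\<lambda>u. \<xi> (bas u)) (incL i 0 (incL j 1 (u # w # rest)))) x)
    - (iterbr (map (\<lambda>u. \<xi> (bas u)) (incL i 1 (incL j 0 (u # w # rest)))) x
       - iterbr (map (\<lambda>u. \<xi> (bas u)) (incL i 1 (incL j 1 (u # w # rest)))) x))"
proof -
  let ?R = "map (\<lambda>u. \<xi> (bas u)) rest"
  let ?B = "\<lambda>a b. acomm (\<xi> (bas a)) (\<xi> (bas b))"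
  let ?W = "\<lambda>a b. \<eta> (Wf a b)"
  define u00 where "u00 = upm i (upm j u)"
  define w00 where "w00 = w"
  define u01 where "u01 = upm i u"
  define w01 where "w01 = upm j w"
  define u10 where "u10 = upm j u"
  define w10 where "w10 = upm i w"
  define u11 where "u11 = u"
  define w11 where "w11 = upm i (upm j w)"
  have vu: "valid_mono n u00" "valid_mono n u01" "valid_mono n u10" "valid_mono n u11"
    using u ij by (simp_all add: u00_def u01_def u10_def u11_def valid_upm)
  have vw: "valid_mono n w00" "valid_mono n w01" "valid_mono n w10" "valid_mono n w11"
    using w ij by (simp_all add: w00_def w01_def w10_def w11_def valid_upm)
  have eu: "even (card (snd u00))" "even (card (snd u01))" "even (card (snd u10))" "even (card (snd u11))"
    using u by (simp_all add: u00_def u01_def u10_def u11_def)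
  have ew: "even (card (snd w00))" "even (card (snd w01))" "even (card (snd w10))" "even (card (snd w11))"
    using w by (simp_all add: w00_def w01_def w10_def w11_def)
  have br: "lcs n 3 (\<lambda>x. ?B a b x - ?W a b x)" if "valid_mono n a" "even (card (snd a))"
      "valid_mono n b" "even (card (snd b))" for a b
    using FS_br[OF F] even_form_bas[OF that(1,2)] even_form_bas[OF that(3,4)] unfolding Wf_def by blast
  have ep: "exact_pos n (Wf a b)" if "valid_mono n a" "even (card (snd a))"
      "valid_mono n b" "even (card (snd b))" for a b
    using exact_pos_Wf that by blast
  have h00: "lcs n 3 (\<lambda>x. ?B u00 w00 x - ?W u00 w00 x)" using br vu eu vw ew by blast
  have h01: "lcs n 3 (\<lambda>x. ?B u01 w01 x - ?W u01 w01 x)" using br vu eu vw ew by blast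
  have h10: "lcs n 3 (\<lambda>x. ?B u10 w10 x - ?W u10 w10 x)" using br vu eu vw ew by blast
  have h11: "lcs n 3 (\<lambda>x. ?B u11 w11 x - ?W u11 w11 x)" using br vu eu vw ew by blast
  have e00: "exact_pos n (Wf u00 w00)" using ep vu eu vw ew by blast
  have e01: "exact_pos n (Wf u01 w01)" using ep vu eu vw ew by blast
  have e10: "exact_pos n (Wf u10 w10)" using ep vu eu vw ew by blast
  have e11: "exact_pos n (Wf u11 w11)" using ep vu eu vw ew by blast
  define A where "A = (\<lambda>v. Wf u00 w00 v - Wf u01 w01 v)"
  define B where "B = (\<lambda>v. Wf u10 w10 v - Wf u11 w11 v)"
  have eA: "exact_pos n A" unfolding A_def by (rule exact_pos_diff[OF e00 e01])
  have eB: "exact_pos n B" unfolding B_def by (rule exact_pos_diff[OF e10 e11])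
  have tA: "lcs n 3 (\<lambda>x. \<eta> A x - (?W u00 w00 x - ?W u01 w01 x))"
    unfolding A_def by (rule eta_diff[OF F e00 e01])
  have tB: "lcs n 3 (\<lambda>x. \<eta> B x - (?W u10 w10 x - ?W u11 w11 x))"
    unfolding B_def by (rule eta_diff[OF F e10 e11])
  have t0: "lcs n 3 (\<lambda>x. \<eta> (\<lambda>v. A v - B v) x - (\<eta> A x - \<eta> B x))"
    by (rule eta_diff[OF F eA eB])
  have AB: "(\<lambda>v. A v - B v) = (\<lambda>_. 0)"
  proof
    fix v
    have "Wf u00 w00 v - Wf u01 w01 v - Wf u10 w10 v + Wf u11 w11 v = 0"
      unfolding u00_def w00_def u01_def w01_def u10_def w10_def u11_def w11_def
      by (rule core1[OF u(1) w(1) u(2) ij])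
    then show "A v - B v = 0" by (simp add: A_def B_def algebra_simps)
  qed
  have z: "lcs n 3 (\<eta> (\<lambda>v. A v - B v))" unfolding AB by (rule eta_zero[OF F])
  have E: "lcs n 3 (\<lambda>x. (?W u00 w00 x - ?W u01 w01 x) - (?W u10 w10 x - ?W u11 w11 x))"
  proof -
    have "lcs n 3 (\<lambda>x. ((\<eta> (\<lambda>v. A v - B v) x - (\<eta> (\<lambda>v. A v - B v) x - (\<eta> A x - \<eta> B x)))
       - (\<eta> A x - (?W u00 w00 x - ?W u01 w01 x))) + (\<eta> B x - (?W u10 w10 x - ?W u11 w11 x)))"
      by (intro lcs_add lcs_diff z t0 tA tB)
    then show ?thesis by (rule lcs_cong) (simp add: fun_eq_iff algebra_simps)
  qed
  have D: "lcs n 3 (\<lambda>x. (?B u00 w00 x - ?B u01 w01 x) - (?B u10 w10 x - ?B u11 w11 x))"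
  proof -
    have "lcs n 3 (\<lambda>x. ((?B u00 w00 x - ?W u00 w00 x) - (?B u01 w01 x - ?W u01 w01 x)
        - ((?B u10 w10 x - ?W u10 w10 x) - (?B u11 w11 x - ?W u11 w11 x)))
        + ((?W u00 w00 x - ?W u01 w01 x) - (?W u10 w10 x - ?W u11 w11 x)))"
      by (intro lcs_add lcs_diff h00 h01 h10 h11 E)
    then show ?thesis by (rule lcs_cong) (simp add: fun_eq_iff algebra_simps)
  qed
  have alg: "\<forall>r\<in>set ?R. is_alg n r" using rest FS_xi[OF F] even_form_bas by auto
  have "lcs n (3 + length ?R) (foldl acomm (\<lambda>x. (?B u00 w00 x - ?B u01 w01 x) - (?B u10 w10 x - ?B u11 w11 x)) ?R)"
    by (rule lcs_foldl[OF D alg])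
  then show ?thesis
    unfolding foldl_acomm_diff
    by (simp add: u00_def w00_def u01_def w01_def u10_def w10_def u11_def w11_def numeral_eq_Suc)
qed

lemma part2:
  assumes F: "FS_data n \<xi> \<eta>" and m: "2 \<le> m" and ij: "i < n" "j < n" and T: "is_tensor n m T"
  shows "lcs n (Suc m) (psi \<xi> (xdiff i (xdiff j T)))"
proof -
  let ?H = "\<lambda>us. iterbr (map (\<lambda>u. \<xi> (bas u)) us)"
  have fin: "finite (supp T)" using T by (simp add: is_tensor_def)
  have lT: "\<forall>k\<in>supp T. 1 < length (id k)" using T m by (auto simp: is_tensor_def)
  have eq: "psi \<xi> (xdiff i (xdiff j T)) = (\<lambda>x. \<Sum>k\<in>supp T. T k *
     ((?H (incL i 0 (incL j 0 (id k))) x - ?H (incL i 0 (incL j 1 (id k))) x)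
      - (?H (incL i 1 (incL j 0 (id k))) x - ?H (incL i 1 (incL j 1 (id k))) x)))"
  proof
    fix x
    show "psi \<xi> (xdiff i (xdiff j T)) x = (\<Sum>k\<in>supp T. T k *
     ((?H (incL i 0 (incL j 0 (id k))) x - ?H (incL i 0 (incL j 1 (id k))) x)
      - (?H (incL i 1 (incL j 0 (id k))) x - ?H (incL i 1 (incL j 1 (id k))) x)))"
      unfolding psi_lext
      by (subst (1) comb_id[OF fin, symmetric]) (rule lext_X[OF fin lT])
  qed
  show ?thesis unfolding eq
  proof (rule lcs_sum[OF fin], simp, rule ballI)
    fix L assume L: "L \<in> supp T"
    have len: "length L = m" and mon: "\<forall>u\<in>set L. valid_mono n u \<and> even (card (snd u))"
      using T L by (auto simp: is_tensor_def)
    obtain u w rest where Lc: "L = u # w # rest" using len m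
      by (cases L; cases "tl L") auto
    have "lcs n (Suc (length (u # w # rest))) (\<lambda>x.
      (?H (incL i 0 (incL j 0 (u # w # rest))) x - ?H (incL i 0 (incL j 1 (u # w # rest))) x)
    - (?H (incL i 1 (incL j 0 (u # w # rest))) x - ?H (incL i 1 (incL j 1 (u # w # rest))) x))"
      by (rule per_L[OF F ij]) (simp_all add: mon[unfolded Lc])
    then have "lcs n (Suc m) (\<lambda>x. T L * ((?H (incL i 0 (incL j 0 L)) x - ?H (incL i 0 (incL j 1 L)) x)
    - (?H (incL i 1 (incL j 0 L)) x - ?H (incL i 1 (incL j 1 L)) x)))"
      using len Lc by (intro lcs.smult) simp
    then show "lcs n (Suc m) (\<lambda>x. T L * ((?H (incL i 0 (incL j 0 (id L))) x - ?H (incL i 0 (incL j 1 (id L))) x)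
    - (?H (incL i 1 (incL j 0 (id L))) x - ?H (incL i 1 (incL j 1 (id L))) x)))" by simp
  qed
qed

theorem lemma3p1:
  fixes n :: nat
  shows "(\<forall>i j \<omega>1 \<omega>2. i < n \<longrightarrow> j < n \<longrightarrow> even_form n \<omega>1 \<longrightarrow> even_form n \<omega>2 \<longrightarrow>
            phi (xdiff i (xdiff j (tens [\<omega>1, \<omega>2]))) = (\<lambda>_. 0)) \<and>
         (\<forall>\<xi> \<eta>. FS_data n \<xi> \<eta> \<longrightarrow>
            (\<forall>m i j T. 2 \<le> m \<longrightarrow> i < n \<longrightarrow> j < n \<longrightarrow> is_tensor n m T \<longrightarrow>
               lcs n (Suc m) (psi \<xi> (xdiff i (xdiff j T)))))"
proof (intro conjI allI impI)
  fix i j \<omega>1 \<omega>2 assume "i < n" "j < n" "even_form n \<omega>1" "even_form n \<omega>2"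
  then show "phi (xdiff i (xdiff j (tens [\<omega>1, \<omega>2]))) = (\<lambda>_. 0)" by (rule part1)
next
  fix \<xi> \<eta> m i j T assume "FS_data n \<xi> \<eta>" "2 \<le> m" "i < n" "j < n" "is_tensor n m T"
  then show "lcs n (Suc m) (psi \<xi> (xdiff i (xdiff j T)))" by (rule part2)
qed

end
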